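(* Let $a+ib\in\overline{\mathcal Z_{1+}}$ (with $a,b\in E_{d+1}$). Then for every $M\in\mathcal C_1$ and every $\tau\in\mathbb C$ with $\mathrm{Im}\,\tau>0$, the point $\exp(\tau M)(a+ib)$ belongs to $\mathcal Z_{1+}$.
   Context: Let $d\ge2$. $E_{d+1}=\mathbb R^{d+1}$, $E^{(c)}_{d+1}=\mathbb C^{d+1}$ with bilinear form $(x,y)=x^0y^0+x^dy^d-\sum_{j=1}^{d-1}x^jy^j$. $X_d=\{x\in E_{d+1}:(x,x)=1\}$, $X_d^{(c)}=\{z\in E^{(c)}_{d+1}:(z,z)=1\}$. $\exp$ is the matrix exponential; $\ell(a\wedge b)x=a(b,x)-b(a,x)$. $\mathcal C_1=\{\ell(a\wedge b):(a,a)=(b,b)=1,(a,b)=0,a^0b^d-a^db^0>0\}$. $\mathcal Z_{1+}=\{\exp(\tau M)c: M\in\mathcal C_1,\ c\in X_d,\ \mathrm{Im}\,\tau>0\}\subset X_d^{(c)}$, and $\overline{\mathcal Z_{1+}}$ denotes its closure. *)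

theory Defs
  imports "HOL-Analysis.Analysis"
begin

text \<open>Coordinates of E_{d+1} are indexed by a finite type 'n with CARD('n) = d+1;
  the two distinguished indices p and q play the roles of the coordinates 0 and d.\<close>

definition lform :: "'n::finite \<Rightarrow> 'n \<Rightarrow> 'a::comm_ring ^ 'n \<Rightarrow> 'a ^ 'n \<Rightarrow> 'a" where
  "lform p q x y = x$p * y$p + x$q * y$q - (\<Sum>j\<in>UNIV - {p, q}. x$j * y$j)"

definition cvec :: "real ^ 'n \<Rightarrow> complex ^ 'n" where
  "cvec x = (\<chi> i. complex_of_real (x$i))"

definition Xd :: "'n::finite \<Rightarrow> 'n \<Rightarrow> (real ^ 'n) set" where
  "Xd p q = {x. lform p q x x = 1}"

definition ell :: "'n::finite \<Rightarrow> 'n \<Rightarrow> complex ^ 'n \<Rightarrow> complex ^ 'n \<Rightarrow> complex ^ 'n ^ 'n" where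
  "ell p q a b = matrix (\<lambda>x. lform p q b x *s a - lform p q a x *s b)"

definition matpow :: "complex ^ 'n ^ 'n \<Rightarrow> nat \<Rightarrow> complex ^ 'n ^ 'n" where
  "matpow A k = ((\<lambda>B. A ** B) ^^ k) (mat 1)"

definition matexp :: "complex ^ 'n ^ 'n \<Rightarrow> complex ^ 'n ^ 'n" where
  "matexp A = (\<Sum>k. (1 / fact k :: real) *\<^sub>R matpow A k)"

definition C1 :: "'n::finite \<Rightarrow> 'n \<Rightarrow> (complex ^ 'n ^ 'n) set" where
  "C1 p q = {ell p q (cvec a) (cvec b) | a b.
      lform p q a a = 1 \<and> lform p q b b = 1 \<and> lform p q a b = 0 \<and>
      a$p * b$q - a$q * b$p > 0}"

definition Z1plus :: "'n::finite \<Rightarrow> 'n \<Rightarrow> (complex ^ 'n) set" where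
  "Z1plus p q = {matexp (map_matrix (\<lambda>m. \<tau> * m) M) *v cvec c | M c \<tau>.
      M \<in> C1 p q \<and> c \<in> Xd p q \<and> Im \<tau> > 0}"

end

theory Submission
  imports Defs
begin



lemma core_det:
  fixes k1 k2 l1 l2 :: "'v::real_inner"
  assumes K: "\<And>c d. c \<noteq> 0 \<or> d \<noteq> 0 \<Longrightarrow> inner (c *\<^sub>R k1 + d *\<^sub>R k2) (c *\<^sub>R k1 + d *\<^sub>R k2) < c\<^sup>2 + d\<^sup>2"
  and L: "\<And>c d. c \<noteq> 0 \<or> d \<noteq> 0 \<Longrightarrow> inner (c *\<^sub>R l1 + d *\<^sub>R l2) (c *\<^sub>R l1 + d *\<^sub>R l2) < c\<^sup>2 + d\<^sup>2"
  shows "(1 - inner k1 l1) * (1 - inner k2 l2) - inner k1 l2 * inner k2 l1 > 0"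
proof -
  have QS: "inner (c *\<^sub>R k1 + d *\<^sub>R k2) (c *\<^sub>R l1 + d *\<^sub>R l2) < c\<^sup>2 + d\<^sup>2"
    if nz: "c \<noteq> 0 \<or> d \<noteq> 0" for c d
  proof -
    define u where "u = c *\<^sub>R k1 + d *\<^sub>R k2"
    define w where "w = c *\<^sub>R l1 + d *\<^sub>R l2"
    define V where "V = c\<^sup>2 + d\<^sup>2"
    have "(norm u)\<^sup>2 < V" using K[OF nz] by (simp add: u_def V_def power2_norm_eq_inner)
    hence nu: "norm u < sqrt V" by (simp add: real_less_rsqrt)
    have "(norm w)\<^sup>2 < V" using L[OF nz] by (simp add: w_def V_def power2_norm_eq_inner)
    hence nw: "norm w < sqrt V" by (simp add: real_less_rsqrt)
    have "V \<ge> 0" by (simp add: V_def)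
    have "inner u w \<le> norm u * norm w" by (rule norm_cauchy_schwarz)
    also have "\<dots> < sqrt V * sqrt V" by (rule mult_strict_mono'[OF nu nw]) auto
    also have "\<dots> = V" using \<open>V \<ge> 0\<close> by simp
    finally show ?thesis by (simp add: u_def w_def V_def)
  qed
  define i11 where "i11 = inner k1 l1"
  define i12 where "i12 = inner k1 l2"
  define i21 where "i21 = inner k2 l1"
  define i22 where "i22 = inner k2 l2"
  have ex: "inner (c *\<^sub>R k1 + d *\<^sub>R k2) (c *\<^sub>R l1 + d *\<^sub>R l2)
     = c * c * i11 + c * d * i12 + d * c * i21 + d * d * i22" for c d
    by (simp add: inner_add_left inner_add_right i11_def i12_def i21_def i22_def algebra_simps)
  define s11 where "s11 = 1 - i11"
  define s22 where "s22 = 1 - i22"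
  define s12 where "s12 = - (i12 + i21) / 2"
  have "i11 < 1" using QS[of 1 0] by (simp add: i11_def)
  hence s11: "s11 > 0" by (simp add: s11_def)
  have "c * c * i11 + c * d * i12 + d * c * i21 + d * d * i22 < c\<^sup>2 + d\<^sup>2" if "c \<noteq> 0 \<or> d \<noteq> 0" for c d
    using QS[OF that] ex by simp
  from this[of s12 "- s11"] s11 have "s12 * s12 * i11 + s12 * (-s11) * i12 + (-s11) * s12 * i21 + (-s11) * (-s11) * i22 < s12\<^sup>2 + s11\<^sup>2"
    by simp
  hence "0 < s11 * (s11 * s22 - s12 * s12)"
    by (simp add: s11_def s22_def s12_def power2_eq_square algebra_simps field_simps)
  hence dS: "0 < s11 * s22 - s12 * s12" using s11 by (simp add: zero_less_mult_iff)
  have "(1 - i11) * (1 - i22) - i12 * i21 = (s11 * s22 - s12 * s12) + ((i12 - i21)/2)\<^sup>2"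
    by (simp add: s11_def s22_def s12_def power2_eq_square field_simps)
  also have "\<dots> > 0" using dS by (simp add: add_pos_nonneg)
  finally show ?thesis by (simp add: i11_def i12_def i21_def i22_def)
qed

lemma core2:
  fixes aN bN xN yN :: "'v::real_inner" and ap aq bp bq xp xq yp yq :: real
  assumes DA: "ap * bq - aq * bp > 0" and DX: "xp * yq - xq * yp > 0"
  and posA: "\<And>c d. c \<noteq> 0 \<or> d \<noteq> 0 \<Longrightarrow> inner (c *\<^sub>R aN + d *\<^sub>R bN) (c *\<^sub>R aN + d *\<^sub>R bN) < (c * ap + d * bp)\<^sup>2 + (c * aq + d * bq)\<^sup>2"
  and posX: "\<And>c d. c \<noteq> 0 \<or> d \<noteq> 0 \<Longrightarrow> inner (c *\<^sub>R xN + d *\<^sub>R yN) (c *\<^sub>R xN + d *\<^sub>R yN) < (c * xp + d * yp)\<^sup>2 + (c * xq + d * yq)\<^sup>2"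
  shows "(ap * xp + aq * xq - inner aN xN) * (bp * yp + bq * yq - inner bN yN) - (ap * yp + aq * yq - inner aN yN) * (bp * xp + bq * xq - inner bN xN) > 0"
proof -
  define DA' where "DA' = ap * bq - aq * bp"
  define DX' where "DX' = xp * yq - xq * yp"
  define k1 where "k1 = (bq / DA') *\<^sub>R aN - (aq / DA') *\<^sub>R bN"
  define k2 where "k2 = (ap / DA') *\<^sub>R bN - (bp / DA') *\<^sub>R aN"
  define l1 where "l1 = (yq / DX') *\<^sub>R xN - (xq / DX') *\<^sub>R yN"
  define l2 where "l2 = (xp / DX') *\<^sub>R yN - (yp / DX') *\<^sub>R xN"
  have DA0: "DA' \<noteq> 0" "DA' > 0" using DA by (auto simp: DA'_def)
  have DX0: "DX' \<noteq> 0" "DX' > 0" using DX by (auto simp: DX'_def)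
  have K: "inner (c *\<^sub>R k1 + d *\<^sub>R k2) (c *\<^sub>R k1 + d *\<^sub>R k2) < c\<^sup>2 + d\<^sup>2" if nz: "c \<noteq> 0 \<or> d \<noteq> 0" for c d
  proof -
    define \<alpha> where "\<alpha> = (c * bq - d * bp) / DA'"
    define \<beta> where "\<beta> = (d * ap - c * aq) / DA'"
    have e1: "\<alpha> * ap + \<beta> * bp = c" using DA0 by (simp add: \<alpha>_def \<beta>_def field_simps) (simp add: DA'_def algebra_simps)
    have e2: "\<alpha> * aq + \<beta> * bq = d" using DA0 by (simp add: \<alpha>_def \<beta>_def field_simps) (simp add: DA'_def algebra_simps)
    have e3: "\<alpha> *\<^sub>R aN + \<beta> *\<^sub>R bN = c *\<^sub>R k1 + d *\<^sub>R k2"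
      using DA0 by (simp add: \<alpha>_def \<beta>_def k1_def k2_def algebra_simps diff_divide_distrib scaleR_diff_left)
    have "\<alpha> \<noteq> 0 \<or> \<beta> \<noteq> 0" using nz e1 e2 by auto
    from posA[OF this] show ?thesis by (simp add: e1 e2 e3)
  qed
  have L: "inner (c *\<^sub>R l1 + d *\<^sub>R l2) (c *\<^sub>R l1 + d *\<^sub>R l2) < c\<^sup>2 + d\<^sup>2" if nz: "c \<noteq> 0 \<or> d \<noteq> 0" for c d
  proof -
    define \<alpha> where "\<alpha> = (c * yq - d * yp) / DX'"
    define \<beta> where "\<beta> = (d * xp - c * xq) / DX'"
    have e1: "\<alpha> * xp + \<beta> * yp = c" using DX0 by (simp add: \<alpha>_def \<beta>_def field_simps) (simp add: DX'_def algebra_simps)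
    have e2: "\<alpha> * xq + \<beta> * yq = d" using DX0 by (simp add: \<alpha>_def \<beta>_def field_simps) (simp add: DX'_def algebra_simps)
    have e3: "\<alpha> *\<^sub>R xN + \<beta> *\<^sub>R yN = c *\<^sub>R l1 + d *\<^sub>R l2"
      using DX0 by (simp add: \<alpha>_def \<beta>_def l1_def l2_def algebra_simps diff_divide_distrib scaleR_diff_left)
    have "\<alpha> \<noteq> 0 \<or> \<beta> \<noteq> 0" using nz e1 e2 by auto
    from posX[OF this] show ?thesis by (simp add: e1 e2 e3)
  qed
  have cd: "(1 - inner k1 l1) * (1 - inner k2 l2) - inner k1 l2 * inner k2 l1 > 0"
    by (rule core_det[OF K L])
  define iax where "iax = inner aN xN"
  define iay where "iay = inner aN yN"
  define ibx where "ibx = inner bN xN"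
  define iby where "iby = inner bN yN"
  have DD: "DA' * DX' \<noteq> 0" using DA0 DX0 by simp
  have i11: "inner k1 l1 = (bq * yq * iax - bq * xq * iay - aq * yq * ibx + aq * xq * iby) / (DA' * DX')"
    using DD by (simp add: k1_def l1_def inner_diff_left inner_diff_right iax_def iay_def ibx_def iby_def field_simps)
  have i22: "inner k2 l2 = (ap * xp * iby - ap * yp * ibx - bp * xp * iay + bp * yp * iax) / (DA' * DX')"
    using DD by (simp add: k2_def l2_def inner_diff_left inner_diff_right iax_def iay_def ibx_def iby_def field_simps)
  have i12: "inner k1 l2 = (bq * xp * iay - bq * yp * iax - aq * xp * iby + aq * yp * ibx) / (DA' * DX')"
    using DD by (simp add: k1_def l2_def inner_diff_left inner_diff_right iax_def iay_def ibx_def iby_def field_simps)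
  have i21: "inner k2 l1 = (ap * yq * ibx - ap * xq * iby - bp * yq * iax + bp * xq * iay) / (DA' * DX')"
    using DD by (simp add: k2_def l1_def inner_diff_left inner_diff_right iax_def iay_def ibx_def iby_def field_simps)
  have pi: "(DA' * DX' - (bq * yq * iax - bq * xq * iay - aq * yq * ibx + aq * xq * iby)) * (DA' * DX' - (ap * xp * iby - ap * yp * ibx - bp * xp * iay + bp * yp * iax))
   - (bq * xp * iay - bq * yp * iax - aq * xp * iby + aq * yp * ibx) * (ap * yq * ibx - ap * xq * iby - bp * yq * iax + bp * xq * iay)
   = (DA' * DX') * ((ap * xp + aq * xq - iax) * (bp * yp + bq * yq - iby) - (ap * yp + aq * yq - iay) * (bp * xp + bq * xq - ibx))"
    unfolding DA'_def DX'_def by (simp add: algebra_simps)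
  have iden: "(ap * xp + aq * xq - inner aN xN) * (bp * yp + bq * yq - inner bN yN) - (ap * yp + aq * yq - inner aN yN) * (bp * xp + bq * xq - inner bN xN)
     = DA' * DX' * ((1 - inner k1 l1) * (1 - inner k2 l2) - inner k1 l2 * inner k2 l1)"
  proof -
    have "DA' * DX' * ((1 - inner k1 l1) * (1 - inner k2 l2) - inner k1 l2 * inner k2 l1)
      = ((DA' * DX' - (bq * yq * iax - bq * xq * iay - aq * yq * ibx + aq * xq * iby)) * (DA' * DX' - (ap * xp * iby - ap * yp * ibx - bp * xp * iay + bp * yp * iax))
   - (bq * xp * iay - bq * yp * iax - aq * xp * iby + aq * yp * ibx) * (ap * yq * ibx - ap * xq * iby - bp * yq * iax + bp * xq * iay)) / (DA' * DX')"
      unfolding i11 i12 i21 i22 using DD by (simp add: field_simps)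
    also have "\<dots> = (ap * xp + aq * xq - iax) * (bp * yp + bq * yq - iby) - (ap * yp + aq * yq - iay) * (bp * xp + bq * xq - ibx)"
      unfolding pi using DD by simp
    finally show ?thesis by (simp add: iax_def iay_def ibx_def iby_def)
  qed
  show ?thesis unfolding iden using DA0 DX0 cd by simp
qed




lemma lform_add_l: "lform p q (x + y) z = lform p q x z + lform p q y z"
  by (simp add: lform_def algebra_simps sum.distrib)
lemma lform_add_r: "lform p q z (x + y) = lform p q z x + lform p q z y"
  by (simp add: lform_def algebra_simps sum.distrib)
lemma lform_diff_l: "lform p q (x - y) z = lform p q x z - lform p q y z"
  by (simp add: lform_def algebra_simps sum_subtractf)
lemma lform_diff_r: "lform p q z (x - y) = lform p q z x - lform p q z y"
  by (simp add: lform_def algebra_simps sum_subtractf)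
lemma lform_smult_l: "lform p q (c *s x) y = c * lform p q x y"
  by (simp add: lform_def algebra_simps sum_distrib_left)
lemma lform_smult_r: "lform p q y (c *s x) = c * lform p q y x"
  by (simp add: lform_def algebra_simps sum_distrib_left)
lemma lform_sym: "lform p q x y = lform p q y x"
  by (simp add: lform_def mult.commute)
lemma lform_neg_l: "lform p q (- x) y = - lform p q x y"
  by (simp add: lform_def sum_negf)
lemma lform_neg_r: "lform p q y (- x) = - lform p q y x"
  by (simp add: lform_def sum_negf)
lemma lform_scaleR_l: "lform p q (c *\<^sub>R x) y = c * lform p q x (y::real^'n)"
  using lform_smult_l[of p q c x y] by (simp add: scalar_mult_eq_scaleR)
lemma lform_scaleR_r: "lform p q y (c *\<^sub>R x) = c * lform p q y (x::real^'n)"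
  using lform_smult_r[of p q y c x] by (simp add: scalar_mult_eq_scaleR)

lemmas lform_lin = lform_add_l lform_add_r lform_diff_l lform_diff_r lform_scaleR_l lform_scaleR_r
  lform_neg_l lform_neg_r

definition nv :: "'n::finite \<Rightarrow> 'n \<Rightarrow> real ^ 'n \<Rightarrow> real ^ 'n" where
  "nv p q x = (\<chi> j. if j = p \<or> j = q then 0 else x $ j)"

lemma nv_add: "nv p q (x + y) = nv p q x + nv p q y"
  by (simp add: nv_def vec_eq_iff)
lemma nv_scaleR: "nv p q (c *\<^sub>R x) = c *\<^sub>R nv p q x"
  by (simp add: nv_def vec_eq_iff)

lemma lform_nv: "lform p q x y = x$p * y$p + x$q * y$q - inner (nv p q x) (nv p q y)"
proof -
  have "inner (nv p q x) (nv p q y) = (\<Sum>j\<in>UNIV. (if j = p \<or> j = q then 0 else x$j * y$j))"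
    by (simp add: inner_vec_def nv_def if_distrib cong: if_cong)
  also have "\<dots> = (\<Sum>j\<in>UNIV - {p, q}. x$j * y$j)"
    by (rule sum.mono_neutral_cong_right) auto
  finally show ?thesis by (simp add: lform_def)
qed

lemma lform_nonpos: "(w::real^'n::finite)$p = 0 \<Longrightarrow> w$q = 0 \<Longrightarrow> lform p q w w \<le> 0"
  by (simp add: lform_nv)

definition pp :: "'n::finite \<Rightarrow> 'n \<Rightarrow> real ^ 'n \<Rightarrow> real ^ 'n \<Rightarrow> bool" where
  "pp p q a b \<longleftrightarrow> (\<forall>c d. (c \<noteq> 0 \<or> d \<noteq> 0) \<longrightarrow> lform p q (c *\<^sub>R a + d *\<^sub>R b) (c *\<^sub>R a + d *\<^sub>R b) > 0)"

definition omE :: "'n::finite \<Rightarrow> 'n \<Rightarrow> real ^ 'n \<Rightarrow> real ^ 'n \<Rightarrow> real" where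
  "omE p q x y = x$p * y$q - x$q * y$p"

definition om :: "'n::finite \<Rightarrow> 'n \<Rightarrow> real ^ 'n \<Rightarrow> real ^ 'n \<Rightarrow> real ^ 'n \<Rightarrow> real ^ 'n \<Rightarrow> real" where
  "om p q a b x y = lform p q a x * lform p q b y - lform p q a y * lform p q b x"

lemma pp_expand:
  assumes "pp p q a b" "c \<noteq> 0 \<or> d \<noteq> 0"
  shows "inner (c *\<^sub>R nv p q a + d *\<^sub>R nv p q b) (c *\<^sub>R nv p q a + d *\<^sub>R nv p q b) < (c * a$p + d * b$p)\<^sup>2 + (c * a$q + d * b$q)\<^sup>2"
proof -
  have "lform p q (c *\<^sub>R a + d *\<^sub>R b) (c *\<^sub>R a + d *\<^sub>R b) > 0" using assms by (auto simp: pp_def)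
  thus ?thesis unfolding lform_nv by (simp add: nv_add nv_scaleR power2_eq_square)
qed

lemma cons:
  assumes "pp p q a b" "omE p q a b > 0" "pp p q x y" "omE p q x y > 0"
  shows "om p q a b x y > 0"
  using core2[of "a$p" "b$q" "a$q" "b$p" "x$p" "y$q" "x$q" "y$p" "nv p q a" "nv p q b" "nv p q x" "nv p q y"]
    pp_expand[OF assms(1)] pp_expand[OF assms(3)] assms(2,4)
  by (simp add: om_def omE_def lform_nv)

lemma omE_nz:
  assumes "pp p q x y" shows "omE p q x y \<noteq> 0"
proof
  assume z: "omE p q x y = 0"
  have ex: "\<exists>c d. (c \<noteq> 0 \<or> d \<noteq> 0) \<and> c * x$p + d * y$p = 0 \<and> c * x$q + d * y$q = 0"
  proof (cases "y$p = 0 \<and> x$p = 0")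
    case False
    then show ?thesis using z by (intro exI[of _ "y$p"] exI[of _ "- x$p"]) (auto simp: omE_def algebra_simps)
  next
    case T: True
    show ?thesis
    proof (cases "y$q = 0 \<and> x$q = 0")
      case False
      then show ?thesis using T z by (intro exI[of _ "y$q"] exI[of _ "- x$q"]) (auto simp: omE_def algebra_simps)
    next
      case True
      then show ?thesis using T by (intro exI[of _ 1] exI[of _ 0]) auto
    qed
  qed
  then obtain c d where cd: "c \<noteq> 0 \<or> d \<noteq> 0" "c * x$p + d * y$p = 0" "c * x$q + d * y$q = 0" by blast
  have "lform p q (c *\<^sub>R x + d *\<^sub>R y) (c *\<^sub>R x + d *\<^sub>R y) \<le> 0"
    by (rule lform_nonpos) (use cd in simp_all)
  moreover have "lform p q (c *\<^sub>R x + d *\<^sub>R y) (c *\<^sub>R x + d *\<^sub>R y) > 0" using assms cd by (auto simp: pp_def)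
  ultimately show False by simp
qed

definition frame :: "'n::finite \<Rightarrow> 'n \<Rightarrow> real ^ 'n \<Rightarrow> real ^ 'n \<Rightarrow> bool" where
  "frame p q a b \<longleftrightarrow> lform p q a a = 1 \<and> lform p q b b = 1 \<and> lform p q a b = 0 \<and> a$p * b$q - a$q * b$p > 0"

lemma frame_pp: assumes "frame p q a b" shows "pp p q a b"
  unfolding pp_def
proof (intro allI impI)
  fix c d :: real assume "c \<noteq> 0 \<or> d \<noteq> 0"
  hence "c\<^sup>2 + d\<^sup>2 > 0" by (auto simp: add_pos_nonneg add_nonneg_pos)
  moreover have "lform p q (c *\<^sub>R a + d *\<^sub>R b) (c *\<^sub>R a + d *\<^sub>R b) = c\<^sup>2 + d\<^sup>2"
    using assms by (simp add: frame_def lform_lin lform_sym[of p q b a] power2_eq_square)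
  ultimately show "lform p q (c *\<^sub>R a + d *\<^sub>R b) (c *\<^sub>R a + d *\<^sub>R b) > 0" by simp
qed

lemma frame_omE: "frame p q a b \<Longrightarrow> omE p q a b > 0"
  by (simp add: frame_def omE_def)

lemma orth_nonpos:
  assumes fr: "frame p q a b" and wa: "lform p q a w = 0" and wb: "lform p q b w = 0"
  shows "lform p q w w \<le> 0"
proof -
  define D where "D = a$p * b$q - a$q * b$p"
  have D: "D \<noteq> 0" using fr by (simp add: frame_def D_def)
  define lam where "lam = (w$p * b$q - w$q * b$p) / D"
  define \<mu> where "\<mu> = (a$p * w$q - a$q * w$p) / D"
  define u where "u = w - lam *\<^sub>R a - \<mu> *\<^sub>R b"
  have "u$p = 0" using D by (simp add: u_def lam_def \<mu>_def field_simps) (simp add: D_def algebra_simps)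
  moreover have "u$q = 0" using D by (simp add: u_def lam_def \<mu>_def field_simps) (simp add: D_def algebra_simps)
  ultimately have "lform p q u u \<le> 0" by (rule lform_nonpos)
  moreover have "lform p q u u = lform p q w w + lam\<^sup>2 + \<mu>\<^sup>2"
  proof -
    have s1: "lform p q w a = 0" "lform p q w b = 0" "lform p q b a = 0" "lform p q a b = 0" "lform p q a a = 1" "lform p q b b = 1"
      using fr wa wb lform_sym[of p q w a] lform_sym[of p q w b] lform_sym[of p q b a] by (auto simp: frame_def)
    show ?thesis unfolding u_def
      by (simp only: lform_lin s1 wa wb) (simp add: frame_def power2_eq_square)
  qed
  ultimately show ?thesis by (smt (verit) zero_le_power2)
qed




lemma lform_cvec: "lform p q (cvec x) (cvec y) = complex_of_real (lform p q x y)"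
  by (simp add: lform_def cvec_def)

lemma vlinI:
  assumes "\<And>x y. f (x + y) = f x + f y" "\<And>c x. f (c *s x) = c *s f x"
  shows "Vector_Spaces.linear (*s) (*s) (f :: 'a::field^'n::finite \<Rightarrow> 'a^'m::finite)"
  unfolding Vector_Spaces.linear_iff by (simp add: assms vec.vector_space_axioms)

lemma ell_linear: "Vector_Spaces.linear (*s) (*s) (\<lambda>x. lform p q b x *s a - lform p q a x *s (b::complex^'n::finite))"
  by (rule vlinI) (simp_all add: lform_add_r lform_smult_r vec_eq_iff ring_distribs mult.assoc)

lemma ell_mv: "ell p q a b *v w = lform p q b w *s a - lform p q a w *s b"
  unfolding ell_def by (simp add: matrix_works[OF ell_linear])

definition Pv :: "'n::finite \<Rightarrow> 'n \<Rightarrow> complex^'n \<Rightarrow> complex^'n \<Rightarrow> complex^'n \<Rightarrow> complex^'n" where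
  "Pv p q a b w = lform p q a w *s a + lform p q b w *s b"

lemma Pv_linear: "Vector_Spaces.linear (*s) (*s) (Pv p q a b)"
  unfolding Pv_def by (rule vlinI) (simp_all add: lform_add_r lform_smult_r vec_eq_iff ring_distribs mult.assoc)

lemma Pm_mv: "matrix (Pv p q a b) *v w = Pv p q a b w"
  by (simp add: matrix_works[OF Pv_linear])

lemma map_matrix_mv: "map_matrix (\<lambda>m. c * m) X *v w = c *s (X *v (w::'a::comm_ring_1^'n::finite))"
  by (simp add: vec_eq_iff matrix_vector_mult_def sum_distrib_left mult.assoc)

lemma scaleR_mv: "((c::real) *\<^sub>R X) *v w = c *\<^sub>R (X *v (w::complex^'n::finite))"
  by (simp add: vec_eq_iff matrix_vector_mult_def scaleR_sum_right)

lemma matpow_0: "matpow X 0 = mat 1" by (simp add: matpow_def)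
lemma matpow_Suc: "matpow X (Suc k) = X ** matpow X k" by (simp add: matpow_def)

definition cc :: "nat \<Rightarrow> complex" where "cc k = complex_of_real (cos_coeff k * fact k)"
definition sc :: "nat \<Rightarrow> complex" where "sc k = complex_of_real (sin_coeff k * fact k)"

lemma cc_Suc: "cc (Suc k) = - sc k"
proof -
  have "cos_coeff (Suc k) * fact (Suc k) = - (sin_coeff k * fact k)"
    by (simp add: cos_coeff_Suc fact_Suc del: of_nat_Suc)
  thus ?thesis by (simp only: cc_def sc_def) simp
qed
lemma sc_Suc: "sc (Suc k) = cc k"
proof -
  have "sin_coeff (Suc k) * fact (Suc k) = cos_coeff k * fact k"
    by (simp add: sin_coeff_Suc fact_Suc del: of_nat_Suc)
  thus ?thesis by (simp only: cc_def sc_def)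
qed

locale fr =
  fixes p q :: "'n::finite" and a b :: "complex^'n"
  assumes aa: "lform p q a a = 1" and bb: "lform p q b b = 1" and ab: "lform p q a b = 0"
begin

lemma ba: "lform p q b a = 0" using ab lform_sym[of p q a b] by simp

definition Mv where "Mv w = lform p q b w *s a - lform p q a w *s b"

lemma M_mv: "ell p q a b *v w = Mv w" by (simp add: ell_mv Mv_def)

lemma lf: "lform p q a (Pv p q a b w) = lform p q a w" "lform p q b (Pv p q a b w) = lform p q b w"
  "lform p q a (Mv w) = lform p q b w" "lform p q b (Mv w) = - lform p q a w"
  by (simp_all add: Pv_def Mv_def lform_add_r lform_diff_r lform_smult_r aa bb ab ba)

lemma Mv_add: "Mv (x + y) = Mv x + Mv y" unfolding Mv_def lform_add_r by (simp add: vec_eq_iff ring_distribs)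
lemma Mv_diff: "Mv (x - y) = Mv x - Mv y" unfolding Mv_def lform_diff_r by (simp add: vec_eq_iff ring_distribs)
lemma Mv_smult: "Mv (c *s x) = c *s Mv x" unfolding Mv_def lform_smult_r by (simp add: vec_eq_iff ring_distribs mult.assoc)
lemma Mv_0: "Mv 0 = 0" using Mv_smult[of 0 0] by simp
lemma Mv_P: "Mv (Pv p q a b w) = Mv w" unfolding Mv_def lf by simp
lemma Mv_M: "Mv (Mv w) = - Pv p q a b w" unfolding Mv_def[of "Mv w"] lf Pv_def by (simp add: vec_eq_iff ring_distribs)

lemma matpow_mv:
  "matpow (map_matrix (\<lambda>m. \<tau> * m) (ell p q a b)) k *v w =
     (if k = 0 then w - Pv p q a b w else 0) + (\<tau>^k * cc k) *s Pv p q a b w + (\<tau>^k * sc k) *s Mv w"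
proof (induction k)
  case 0
  then show ?case by (simp add: matpow_0 cc_def sc_def)
next
  case (Suc k)
  have "matpow (map_matrix (\<lambda>m. \<tau> * m) (ell p q a b)) (Suc k) *v w
     = \<tau> *s (ell p q a b *v (matpow (map_matrix (\<lambda>m. \<tau> * m) (ell p q a b)) k *v w))"
    by (simp add: matpow_Suc matrix_vector_mul_assoc[symmetric] map_matrix_mv)
  also have "\<dots> = \<tau> *s Mv ((if k = 0 then w - Pv p q a b w else 0) + (\<tau>^k * cc k) *s Pv p q a b w + (\<tau>^k * sc k) *s Mv w)"
    by (simp add: Suc M_mv)
  also have "\<dots> = (\<tau>^(Suc k) * cc (Suc k)) *s Pv p q a b w + (\<tau>^(Suc k) * sc (Suc k)) *s Mv w"
    unfolding cc_Suc sc_Suc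
    by (cases "k = 0") (simp_all add: Mv_add Mv_diff Mv_smult Mv_0 Mv_P Mv_M vec_eq_iff ring_distribs mult_ac)
  finally show ?case by simp
qed

end




lemma bl_mm: "bounded_linear (\<lambda>c::complex. map_matrix (\<lambda>m. c * m) (N::complex^'n::finite^'n))"
  unfolding linear_conv_bounded_linear[symmetric]
  by (rule linearI) (simp_all add: vec_eq_iff ring_distribs)

context fr begin

lemma term_eq:
  "(1 / fact k) *\<^sub>R matpow (map_matrix (\<lambda>m. \<tau> * m) (ell p q a b)) k =
    (if k = 0 then mat 1 - matrix (Pv p q a b) else 0)
    + map_matrix (\<lambda>m. (cos_coeff k *\<^sub>R \<tau>^k) * m) (matrix (Pv p q a b))
    + map_matrix (\<lambda>m. (sin_coeff k *\<^sub>R \<tau>^k) * m) (ell p q a b)"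
proof -
  have "((1 / fact k) *\<^sub>R matpow (map_matrix (\<lambda>m. \<tau> * m) (ell p q a b)) k) *v w =
    ((if k = 0 then mat 1 - matrix (Pv p q a b) else 0)
    + map_matrix (\<lambda>m. (cos_coeff k *\<^sub>R \<tau>^k) * m) (matrix (Pv p q a b))
    + map_matrix (\<lambda>m. (sin_coeff k *\<^sub>R \<tau>^k) * m) (ell p q a b)) *v w" for w
  proof -
    have f: "fact k \<noteq> (0::real)" by simp
    have "((if k = 0 then mat 1 - matrix (Pv p q a b) else 0) :: complex^'n^'n) *v w = (if k = 0 then w - Pv p q a b w else 0)"
      by (cases "k = 0") (simp_all add: matrix_vector_mult_diff_rdistrib Pm_mv)
    then show ?thesis
      unfolding scaleR_mv matpow_mv matrix_vector_mult_add_rdistrib map_matrix_mv Pm_mv M_mv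
      using f by (simp add: vec_eq_iff cc_def sc_def) (simp add: scaleR_conv_of_real field_simps)
  qed
  thus ?thesis by (simp add: matrix_eq)
qed

lemma matexp_eq: "matexp (map_matrix (\<lambda>m. \<tau> * m) (ell p q a b)) =
   mat 1 - matrix (Pv p q a b) + map_matrix (\<lambda>m. cos \<tau> * m) (matrix (Pv p q a b)) + map_matrix (\<lambda>m. sin \<tau> * m) (ell p q a b)"
proof -
  have s1: "(\<lambda>k. if k = 0 then mat 1 - matrix (Pv p q a b) else 0) sums (mat 1 - matrix (Pv p q a b) :: complex^'n^'n)"
    using sums_single[of 0 "\<lambda>_. mat 1 - matrix (Pv p q a b) :: complex^'n^'n"] by simp
  have s2: "(\<lambda>k. map_matrix (\<lambda>m. (cos_coeff k *\<^sub>R \<tau>^k) * m) (matrix (Pv p q a b))) sums map_matrix (\<lambda>m. cos \<tau> * m) (matrix (Pv p q a b))"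
    by (rule bounded_linear.sums[OF bl_mm cos_converges])
  have s3: "(\<lambda>k. map_matrix (\<lambda>m. (sin_coeff k *\<^sub>R \<tau>^k) * m) (ell p q a b)) sums map_matrix (\<lambda>m. sin \<tau> * m) (ell p q a b)"
    by (rule bounded_linear.sums[OF bl_mm sin_converges])
  have "(\<lambda>k. (1 / fact k :: real) *\<^sub>R matpow (map_matrix (\<lambda>m. \<tau> * m) (ell p q a b)) k) sums
     (mat 1 - matrix (Pv p q a b) + map_matrix (\<lambda>m. cos \<tau> * m) (matrix (Pv p q a b)) + map_matrix (\<lambda>m. sin \<tau> * m) (ell p q a b))"
    unfolding term_eq by (intro sums_add s1 s2 s3)
  thus ?thesis unfolding matexp_def by (rule sums_unique[symmetric])
qed

lemma matexp_mv: "matexp (map_matrix (\<lambda>m. \<tau> * m) (ell p q a b)) *v w =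
   w - Pv p q a b w + cos \<tau> *s Pv p q a b w + sin \<tau> *s Mv w"
  unfolding matexp_eq by (simp add: matrix_vector_mult_add_rdistrib matrix_vector_mult_diff_rdistrib map_matrix_mv Pm_mv M_mv)

end




definition rv :: "complex^'n::finite \<Rightarrow> real^'n" where "rv z = (\<chi> i. Re (z$i))"
definition iv :: "complex^'n::finite \<Rightarrow> real^'n" where "iv z = (\<chi> i. Im (z$i))"

lemma decomp: "cvec (rv z) + \<i> *s cvec (iv z) = z"
  by (simp add: vec_eq_iff rv_def iv_def cvec_def complex_eq_iff)

lemma rv_z: "rv (cvec x + \<i> *s cvec y) = x" by (simp add: vec_eq_iff rv_def cvec_def)
lemma iv_z: "iv (cvec x + \<i> *s cvec y) = y" by (simp add: vec_eq_iff iv_def cvec_def)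

lemma cvec_0: "cvec 0 = 0" by (simp add: vec_eq_iff cvec_def)

lemma lform_cvec_z: "lform p q (cvec a) (cvec x + \<i> *s cvec y) = Complex (lform p q a x) (lform p q a y)"
  by (simp add: lform_add_r lform_smult_r lform_cvec complex_eq_iff)

definition Xr :: "'n::finite \<Rightarrow> 'n \<Rightarrow> real^'n \<Rightarrow> real^'n \<Rightarrow> complex \<Rightarrow> real^'n \<Rightarrow> real^'n \<Rightarrow> real^'n" where
  "Xr p q a b \<tau> x y = x
    + ((Re (cos \<tau>) - 1) * lform p q a x - Im (cos \<tau>) * lform p q a y + Re (sin \<tau>) * lform p q b x - Im (sin \<tau>) * lform p q b y) *\<^sub>R a
    + ((Re (cos \<tau>) - 1) * lform p q b x - Im (cos \<tau>) * lform p q b y - Re (sin \<tau>) * lform p q a x + Im (sin \<tau>) * lform p q a y) *\<^sub>R b"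

definition Yr :: "'n::finite \<Rightarrow> 'n \<Rightarrow> real^'n \<Rightarrow> real^'n \<Rightarrow> complex \<Rightarrow> real^'n \<Rightarrow> real^'n \<Rightarrow> real^'n" where
  "Yr p q a b \<tau> x y = y
    + ((Re (cos \<tau>) - 1) * lform p q a y + Im (cos \<tau>) * lform p q a x + Re (sin \<tau>) * lform p q b y + Im (sin \<tau>) * lform p q b x) *\<^sub>R a
    + ((Re (cos \<tau>) - 1) * lform p q b y + Im (cos \<tau>) * lform p q b x - Re (sin \<tau>) * lform p q a y - Im (sin \<tau>) * lform p q a x) *\<^sub>R b"

lemma E_formula:
  assumes "lform p q a a = 1" "lform p q b b = 1" "lform p q a b = 0"
  shows "matexp (map_matrix (\<lambda>m. \<tau> * m) (ell p q (cvec a) (cvec b))) *v (cvec x + \<i> *s cvec y)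
     = cvec (Xr p q a b \<tau> x y) + \<i> *s cvec (Yr p q a b \<tau> x y)"
proof -
  interpret fr p q "cvec a" "cvec b"
    by unfold_locales (simp_all add: lform_cvec assms)
  show ?thesis
    unfolding matexp_mv Pv_def Mv_def lform_cvec_z
    by (simp add: vec_eq_iff Xr_def Yr_def cvec_def complex_eq_iff algebra_simps)
qed




lemma lin2:
  fixes a b x y :: "real^'n::finite" and u1 v1 u2 v2 :: real
  assumes aa: "lform p q a a = 1" and bb: "lform p q b b = 1" and ab: "lform p q a b = 0"
  defines "X \<equiv> x + u1 *\<^sub>R a + v1 *\<^sub>R b" and "Y \<equiv> y + u2 *\<^sub>R a + v2 *\<^sub>R b"
  shows "lform p q a X = lform p q a x + u1" "lform p q b X = lform p q b x + v1"
    "lform p q a Y = lform p q a y + u2" "lform p q b Y = lform p q b y + v2"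
    "lform p q X X = lform p q x x + 2 * u1 * lform p q a x + 2 * v1 * lform p q b x + u1^2 + v1^2"
    "lform p q Y Y = lform p q y y + 2 * u2 * lform p q a y + 2 * v2 * lform p q b y + u2^2 + v2^2"
    "lform p q X Y = lform p q x y + u2 * lform p q a x + v2 * lform p q b x + u1 * lform p q a y + v1 * lform p q b y + u1 * u2 + v1 * v2"
proof -
  have s: "lform p q x a = lform p q a x" "lform p q x b = lform p q b x" "lform p q y a = lform p q a y"
    "lform p q y b = lform p q b y" "lform p q b a = 0" "lform p q y x = lform p q x y"
    using lform_sym ab by metis+
  show "lform p q a X = lform p q a x + u1" "lform p q b X = lform p q b x + v1"
    "lform p q a Y = lform p q a y + u2" "lform p q b Y = lform p q b y + v2"
    unfolding X_def Y_def by (simp_all only: lform_lin s aa bb ab)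
  show "lform p q X X = lform p q x x + 2 * u1 * lform p q a x + 2 * v1 * lform p q b x + u1^2 + v1^2"
    unfolding X_def by (simp only: lform_lin s aa bb ab) (simp add: power2_eq_square algebra_simps)
  show "lform p q Y Y = lform p q y y + 2 * u2 * lform p q a y + 2 * v2 * lform p q b y + u2^2 + v2^2"
    unfolding Y_def by (simp only: lform_lin s aa bb ab) (simp add: power2_eq_square algebra_simps)
  show "lform p q X Y = lform p q x y + u2 * lform p q a x + v2 * lform p q b x + u1 * lform p q a y + v1 * lform p q b y + u1 * u2 + v1 * v2"
    unfolding X_def Y_def by (simp only: lform_lin s aa bb ab) (simp add: algebra_simps)
qed

lemma trig:
  fixes \<tau> :: complex
  defines "ch \<equiv> (exp (Im \<tau>) + exp (- Im \<tau>)) / 2" and "sh \<equiv> (exp (Im \<tau>) - exp (- Im \<tau>)) / 2"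
  shows "Re (cos \<tau>) = cos (Re \<tau>) * ch" "Im (cos \<tau>) = - sin (Re \<tau>) * sh"
    "Re (sin \<tau>) = sin (Re \<tau>) * ch" "Im (sin \<tau>) = cos (Re \<tau>) * sh"
    "ch^2 - sh^2 = 1" "(cos (Re \<tau>))^2 + (sin (Re \<tau>))^2 = 1"
    "Im \<tau> > 0 \<Longrightarrow> sh > 0" "ch > 0"
proof -
  show "Re (cos \<tau>) = cos (Re \<tau>) * ch" "Im (cos \<tau>) = - sin (Re \<tau>) * sh"
    "Re (sin \<tau>) = sin (Re \<tau>) * ch" "Im (sin \<tau>) = cos (Re \<tau>) * sh"
    by (simp_all add: Re_cos Im_cos Re_sin Im_sin ch_def sh_def field_simps)
  have "exp (Im \<tau>) * exp (- Im \<tau>) = 1" by (simp add: exp_minus_inverse)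
  thus "ch^2 - sh^2 = 1" by (simp add: ch_def sh_def power2_eq_square field_simps)
  show "(cos (Re \<tau>))^2 + (sin (Re \<tau>))^2 = 1" by (simp add: add.commute)
  show "Im \<tau> > 0 \<Longrightarrow> sh > 0" by (simp add: sh_def)
  show "ch > 0" by (simp add: ch_def add_pos_pos)
qed

lemma main_ident:
  fixes a b x y :: "real^'n::finite" and \<tau> :: complex
  assumes aa: "lform p q a a = 1" and bb: "lform p q b b = 1" and ab: "lform p q a b = 0"
  defines "ch \<equiv> (exp (Im \<tau>) + exp (- Im \<tau>)) / 2" and "sh \<equiv> (exp (Im \<tau>) - exp (- Im \<tau>)) / 2"
  defines "X \<equiv> Xr p q a b \<tau> x y" and "Y \<equiv> Yr p q a b \<tau> x y"
  defines "N \<equiv> (lform p q a x)^2 + (lform p q a y)^2 + (lform p q b x)^2 + (lform p q b y)^2"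
  shows "lform p q X X - lform p q Y Y = lform p q x x - lform p q y y"
    "lform p q X Y = lform p q x y"
    "lform p q Y Y = lform p q y y + sh^2 * N - 2 * ch * sh * om p q a b x y"
    "om p q a b X Y = om p q a b x y * (ch^2 + sh^2) - N * ch * sh"
proof -
  note L = lin2[OF aa bb ab]
  note T = trig[of \<tau>, folded ch_def sh_def]
  define cs where "cs = cos (Re \<tau>)"
  define sn where "sn = sin (Re \<tau>)"
  have h1: "cs^2 + sn^2 = 1" "ch^2 - sh^2 = 1" using T by (simp_all add: cs_def sn_def)
  have XY: "X = x + ((cs * ch - 1) * lform p q a x - (- sn * sh) * lform p q a y + (sn * ch) * lform p q b x - (cs * sh) * lform p q b y) *\<^sub>R a
    + ((cs * ch - 1) * lform p q b x - (- sn * sh) * lform p q b y - (sn * ch) * lform p q a x + (cs * sh) * lform p q a y) *\<^sub>R b"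
    "Y = y + ((cs * ch - 1) * lform p q a y + (- sn * sh) * lform p q a x + (sn * ch) * lform p q b y + (cs * sh) * lform p q b x) *\<^sub>R a
    + ((cs * ch - 1) * lform p q b y + (- sn * sh) * lform p q b x - (sn * ch) * lform p q a y - (cs * sh) * lform p q a x) *\<^sub>R b"
    unfolding X_def Y_def Xr_def Yr_def T(1-4) cs_def sn_def by simp_all
  define A1 where "A1 = lform p q a x"
  define A2 where "A2 = lform p q a y"
  define B1 where "B1 = lform p q b x"
  define B2 where "B2 = lform p q b y"
  show "lform p q X X - lform p q Y Y = lform p q x x - lform p q y y"
    unfolding XY L A1_def[symmetric] A2_def[symmetric] B1_def[symmetric] B2_def[symmetric]
    using h1 by algebra
  show "lform p q X Y = lform p q x y"
    unfolding XY L A1_def[symmetric] A2_def[symmetric] B1_def[symmetric] B2_def[symmetric]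
    using h1 by algebra
  show "lform p q Y Y = lform p q y y + sh^2 * N - 2 * ch * sh * om p q a b x y"
    unfolding XY L om_def N_def A1_def[symmetric] A2_def[symmetric] B1_def[symmetric] B2_def[symmetric]
    using h1 by algebra
  show "om p q a b X Y = om p q a b x y * (ch^2 + sh^2) - N * ch * sh"
    unfolding XY L om_def N_def A1_def[symmetric] A2_def[symmetric] B1_def[symmetric] B2_def[symmetric]
    using h1 by algebra
qed




lemma lform_0_r: "lform p q x 0 = 0" by (simp add: lform_def)
lemma lform_0_l: "lform p q 0 x = 0" by (simp add: lform_def)

lemma pp_of:
  assumes "lform p q x y = 0" "lform p q x x > 0" "lform p q y y > 0"
  shows "pp p q x y"
  unfolding pp_def
proof (intro allI impI)
  fix c d :: real assume cd: "c \<noteq> 0 \<or> d \<noteq> 0"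
  have e: "lform p q (c *\<^sub>R x + d *\<^sub>R y) (c *\<^sub>R x + d *\<^sub>R y) = c^2 * lform p q x x + d^2 * lform p q y y"
    using assms(1) lform_sym[of p q y x] by (simp add: lform_lin power2_eq_square algebra_simps)
  have "c^2 * lform p q x x + d^2 * lform p q y y > 0"
    using cd assms(2,3) by (auto intro: add_pos_nonneg add_nonneg_pos)
  thus "lform p q (c *\<^sub>R x + d *\<^sub>R y) (c *\<^sub>R x + d *\<^sub>R y) > 0" using e by simp
qed

lemma U1:
  assumes "frame p q a b" "pp p q x y" "om p q a b x y < 0"
  shows "omE p q x y < 0"
proof -
  have "omE p q x y \<noteq> 0" by (rule omE_nz[OF assms(2)])
  moreover have "\<not> omE p q x y > 0"
    using cons[OF frame_pp[OF assms(1)] frame_omE[OF assms(1)] assms(2)] assms(3) by auto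
  ultimately show ?thesis by simp
qed

lemma pp_neg: "pp p q x y \<Longrightarrow> pp p q x (- y)"
  unfolding pp_def
proof (intro allI impI)
  fix c d :: real
  assume h: "\<forall>c d. c \<noteq> 0 \<or> d \<noteq> 0 \<longrightarrow> 0 < lform p q (c *\<^sub>R x + d *\<^sub>R y) (c *\<^sub>R x + d *\<^sub>R y)"
    and cd: "c \<noteq> 0 \<or> d \<noteq> 0"
  have e: "c *\<^sub>R x + d *\<^sub>R - y = c *\<^sub>R x + (- d) *\<^sub>R y" by simp
  have "c \<noteq> 0 \<or> - d \<noteq> 0" using cd by simp
  from h[rule_format, OF this] show "0 < lform p q (c *\<^sub>R x + d *\<^sub>R - y) (c *\<^sub>R x + d *\<^sub>R - y)" unfolding e .
qed

lemma U2:
  assumes "frame p q a b" "frame p q a0 b0" "pp p q x y" "om p q a0 b0 x y < 0"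
  shows "om p q a b x y < 0"
proof -
  have "omE p q x y < 0" by (rule U1[OF assms(2,3,4)])
  hence "omE p q x (- y) > 0" by (simp add: omE_def)
  from cons[OF frame_pp[OF assms(1)] frame_omE[OF assms(1)] pp_neg[OF assms(3)] this]
  show ?thesis by (simp add: om_def lform_neg_r)
qed

definition Sset :: "'n::finite \<Rightarrow> 'n \<Rightarrow> real^'n \<Rightarrow> real^'n \<Rightarrow> (complex^'n) set" where
  "Sset p q a b = {z. lform p q (rv z) (rv z) - lform p q (iv z) (iv z) = 1 \<and> lform p q (rv z) (iv z) = 0
     \<and> lform p q (iv z) (iv z) \<ge> 0 \<and> om p q a b (rv z) (iv z) \<le> 0}"

lemma cont_lf:
  assumes "continuous_on UNIV f" "continuous_on UNIV g"
  shows "continuous_on UNIV (\<lambda>z. lform p q (f z) (g z :: real^'n::finite))"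
  unfolding lform_def by (intro continuous_intros assms)

lemma cont_rv: "continuous_on UNIV (rv :: complex^'n::finite \<Rightarrow> real^'n)"
  unfolding rv_def by (intro continuous_on_vec_lambda continuous_intros)
lemma cont_iv: "continuous_on UNIV (iv :: complex^'n::finite \<Rightarrow> real^'n)"
  unfolding iv_def by (intro continuous_on_vec_lambda continuous_intros)

lemma closed_Sset: "closed (Sset p q a b)"
proof -
  note c = cont_lf[OF cont_rv cont_rv] cont_lf[OF cont_iv cont_iv] cont_lf[OF cont_rv cont_iv]
    cont_lf[OF continuous_on_const cont_rv] cont_lf[OF continuous_on_const cont_iv]
  show ?thesis unfolding Sset_def om_def
    by (intro closed_Collect_conj closed_Collect_eq closed_Collect_le continuous_intros c)
qed




lemma C1_frame:
  assumes "M \<in> C1 p q"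
  obtains a b where "M = ell p q (cvec a) (cvec b)" "frame p q a b"
  using assms unfolding C1_def frame_def by blast

lemma frame_nondeg:
  assumes fr: "frame p q a b" and c: "lform p q c c = 1"
  shows "(lform p q a c)^2 + (lform p q b c)^2 > 0"
proof (rule ccontr)
  assume "\<not> ?thesis"
  hence h: "(lform p q a c)^2 + (lform p q b c)^2 \<le> 0" by simp
  hence "(lform p q a c)^2 = 0" "(lform p q b c)^2 = 0" by (smt (verit) zero_le_power2)+
  hence "lform p q a c = 0" "lform p q b c = 0" by simp_all
  from orth_nonpos[OF fr this] c show False by simp
qed

lemma frame_lf: "frame p q a b \<Longrightarrow> lform p q a a = 1 \<and> lform p q b b = 1 \<and> lform p q a b = 0"
  by (simp add: frame_def)

lemma Z_sub:
  assumes fr: "frame p q a b"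
  shows "Z1plus p q \<subseteq> Sset p q a b"
proof
  fix z assume "z \<in> Z1plus p q"
  then obtain M c \<tau> where z: "z = matexp (map_matrix (\<lambda>m. \<tau> * m) M) *v cvec c"
    and M: "M \<in> C1 p q" and c: "c \<in> Xd p q" and t: "Im \<tau> > 0"
    unfolding Z1plus_def by blast
  obtain a1 b1 where M1: "M = ell p q (cvec a1) (cvec b1)" and fr1: "frame p q a1 b1"
    using C1_frame[OF M] by blast
  have cc: "lform p q c c = 1" using c by (simp add: Xd_def)
  note fl = frame_lf[OF fr1]
  define X where "X = Xr p q a1 b1 \<tau> c 0"
  define Y where "Y = Yr p q a1 b1 \<tau> c 0"
  have zXY: "z = cvec X + \<i> *s cvec Y"
    using E_formula[of p q a1 b1 \<tau> c 0] fl unfolding z M1 X_def Y_def by (simp add: cvec_0)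
  define ch where "ch = (exp (Im \<tau>) + exp (- Im \<tau>)) / 2"
  define sh where "sh = (exp (Im \<tau>) - exp (- Im \<tau>)) / 2"
  define N where "N = (lform p q a1 c)^2 + (lform p q a1 0)^2 + (lform p q b1 c)^2 + (lform p q b1 0)^2"
  note MI = main_ident[of p q a1 b1 \<tau> c 0, folded ch_def sh_def X_def Y_def N_def]
  have om0: "om p q a1 b1 c 0 = 0" by (simp add: om_def lform_0_r)
  have N: "N > 0" using frame_nondeg[OF fr1 cc] by (simp add: N_def lform_0_r)
  have T: "ch > 0" "sh > 0" using trig[of \<tau>] t by (simp_all add: ch_def sh_def)
  have QY: "lform p q Y Y > 0" using MI(3) fl om0 N T by (simp add: lform_0_r)
  have QX: "lform p q X X - lform p q Y Y = 1" using MI(1) fl cc by (simp add: lform_0_r)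
  have BXY: "lform p q X Y = 0" using MI(2) fl by (simp add: lform_0_r)
  have om1: "om p q a1 b1 X Y < 0" using MI(4) fl om0 N T by simp
  have ppXY: "pp p q X Y" using pp_of[OF BXY _ QY] QX QY by simp
  have "om p q a b X Y < 0" by (rule U2[OF fr fr1 ppXY om1])
  thus "z \<in> Sset p q a b" using QX BXY QY unfolding zXY Sset_def by (simp add: rv_z iv_z)
qed

lemma T_con:
  fixes x y :: "real^'n::finite"
  assumes Q: "lform p q x x - lform p q y y = 1" and B: "lform p q x y = 0" and Qy: "lform p q y y > 0"
    and om: "omE p q x y < 0"
  shows "cvec x + \<i> *s cvec y \<in> Z1plus p q"
proof -
  define s where "s = sqrt (lform p q y y)"
  define c where "c = sqrt (lform p q x x)"
  have s: "s > 0" "s^2 = lform p q y y" using Qy by (simp_all add: s_def)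
  have c: "c > 0" "c^2 = lform p q x x" using Q Qy by (simp_all add: c_def)
  have cs: "c^2 - s^2 = 1" using s c Q by simp
  define a' where "a' = (1/c) *\<^sub>R x"
  define b' where "b' = (-1/s) *\<^sub>R y"
  have Qx: "lform p q x x > 0" using Q Qy by simp
  have aa: "lform p q a' a' = 1" using c Qx by (simp add: a'_def lform_lin power2_eq_square)
  have bb: "lform p q b' b' = 1" using s Qy by (simp add: b'_def lform_lin power2_eq_square)
  have ab: "lform p q a' b' = 0" using B by (simp add: a'_def b'_def lform_lin)
  have "omE p q a' b' = (- 1 / (c * s)) * omE p q x y" by (simp add: a'_def b'_def omE_def algebra_simps)
  moreover have "omE p q x y / (c * s) < 0" using om c s by (simp add: divide_neg_pos)
  ultimately have oab: "omE p q a' b' > 0" by simp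
  have fr: "frame p q a' b'" using aa bb ab oab by (simp add: frame_def omE_def)
  have s2: "s^2 > 0" using s(1) by simp
  have "1 < c^2" using cs s2 by linarith
  hence "(1::real)^2 < c^2" by simp
  hence "1 < c" using power_less_imp_less_base c(1) by fastforce
  hence sc1: "s + c > 1" using s(1) by simp
  define \<sigma> where "\<sigma> = ln (s + c)"
  have sig: "\<sigma> > 0" using sc1 by (simp add: \<sigma>_def)
  have e1: "exp \<sigma> = s + c" using sc1 by (simp add: \<sigma>_def)
  have e2: "exp (- \<sigma>) = c - s"
  proof -
    have "(s + c) * (c - s) = 1" using cs by (simp add: power2_eq_square algebra_simps)
    moreover have "s + c \<noteq> 0" using sc1 by simp
    ultimately have "c - s = 1 / (s + c)" by (simp add: eq_divide_eq mult.commute)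
    thus ?thesis using e1 by (simp add: exp_minus inverse_eq_divide)
  qed
  define \<tau> where "\<tau> = \<i> * complex_of_real \<sigma>"
  have t: "Re \<tau> = 0" "Im \<tau> = \<sigma>" by (simp_all add: \<tau>_def)
  have ch: "(exp (Im \<tau>) + exp (- Im \<tau>)) / 2 = c" using e1 e2 t by simp
  have sh: "(exp (Im \<tau>) - exp (- Im \<tau>)) / 2 = s" using e1 e2 t by simp
  note T = trig[of \<tau>, unfolded ch sh t(1)]
  have mem: "matexp (map_matrix (\<lambda>m. \<tau> * m) (ell p q (cvec a') (cvec b'))) *v cvec a' \<in> Z1plus p q"
    unfolding Z1plus_def
  proof (intro CollectI exI conjI)
    show "ell p q (cvec a') (cvec b') \<in> C1 p q" using fr unfolding C1_def frame_def by blast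
    show "a' \<in> Xd p q" using aa by (simp add: Xd_def)
    show "Im \<tau> > 0" using t sig by simp
  qed (rule refl)
  have "matexp (map_matrix (\<lambda>m. \<tau> * m) (ell p q (cvec a') (cvec b'))) *v cvec a'
      = cvec (Xr p q a' b' \<tau> a' 0) + \<i> *s cvec (Yr p q a' b' \<tau> a' 0)"
    using E_formula[OF aa bb ab, of \<tau> a' 0] by (simp add: cvec_0)
  moreover have "Xr p q a' b' \<tau> a' 0 = x"
    unfolding Xr_def T(1-4) using aa ab c lform_sym[of p q b' a']
    by (simp add: lform_0_r a'_def) (simp add: scaleR_add_left[symmetric] add_divide_distrib[symmetric])
  moreover have "Yr p q a' b' \<tau> a' 0 = y"
    unfolding Yr_def T(1-4) using aa ab s lform_sym[of p q b' a']
    by (simp add: lform_0_r b'_def)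
  ultimately show ?thesis using mem by simp
qed

theorem lemma5:
  fixes p q :: "'n::finite" and a b :: "real ^ 'n" and M :: "complex ^ 'n ^ 'n" and \<tau> :: complex
  assumes "CARD('n) \<ge> 3" and "p \<noteq> q"
    and "cvec a + \<i> *s cvec b \<in> closure (Z1plus p q)"
    and "M \<in> C1 p q" and "Im \<tau> > 0"
  shows "matexp (map_matrix (\<lambda>m. \<tau> * m) M) *v (cvec a + \<i> *s cvec b) \<in> Z1plus p q"
proof -
  obtain a0 b0 where M: "M = ell p q (cvec a0) (cvec b0)" and fr: "frame p q a0 b0"
    using C1_frame[OF assms(4)] by blast
  note fl = frame_lf[OF fr]
  have "closure (Z1plus p q) \<subseteq> Sset p q a0 b0"
    by (rule closure_minimal[OF Z_sub[OF fr] closed_Sset])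
  hence "cvec a + \<i> *s cvec b \<in> Sset p q a0 b0" using assms(3) by blast
  hence S: "lform p q a a - lform p q b b = 1" "lform p q a b = 0" "lform p q b b \<ge> 0" "om p q a0 b0 a b \<le> 0"
    unfolding Sset_def by (simp_all add: rv_z iv_z)
  define X where "X = Xr p q a0 b0 \<tau> a b"
  define Y where "Y = Yr p q a0 b0 \<tau> a b"
  have img: "matexp (map_matrix (\<lambda>m. \<tau> * m) M) *v (cvec a + \<i> *s cvec b) = cvec X + \<i> *s cvec Y"
    unfolding M X_def Y_def using E_formula fl by blast
  define ch where "ch = (exp (Im \<tau>) + exp (- Im \<tau>)) / 2"
  define sh where "sh = (exp (Im \<tau>) - exp (- Im \<tau>)) / 2"
  define N where "N = (lform p q a0 a)^2 + (lform p q a0 b)^2 + (lform p q b0 a)^2 + (lform p q b0 b)^2"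
  note MI = main_ident[of p q a0 b0 \<tau> a b, folded ch_def sh_def X_def Y_def N_def]
  have T: "ch > 0" "sh > 0" using trig[of \<tau>] assms(5) by (simp_all add: ch_def sh_def)
  have N: "N > 0"
  proof (rule ccontr)
    assume "\<not> N > 0"
    hence "N \<le> 0" by simp
    hence "(lform p q a0 a)^2 = 0" "(lform p q a0 b)^2 = 0" "(lform p q b0 a)^2 = 0" "(lform p q b0 b)^2 = 0"
      unfolding N_def by (smt (verit) zero_le_power2)+
    hence z: "lform p q a0 a = 0" "lform p q a0 b = 0" "lform p q b0 a = 0" "lform p q b0 b = 0" by simp_all
    have "lform p q a a \<le> 0" by (rule orth_nonpos[OF fr z(1) z(3)])
    moreover have "lform p q b b \<le> 0" by (rule orth_nonpos[OF fr z(2) z(4)])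
    ultimately show False using S by simp
  qed
  have QX: "lform p q X X - lform p q Y Y = 1" using MI(1) fl S by simp
  have BXY: "lform p q X Y = 0" using MI(2) fl S by simp
  have "sh^2 * N > 0" using T N by simp
  moreover have "- (2 * ch * sh * om p q a0 b0 a b) \<ge> 0" using T S(4)
    by (simp add: mult_nonneg_nonpos)
  ultimately have QY: "lform p q Y Y > 0" using MI(3) fl S(3) by simp
  have "om p q a0 b0 a b * (ch^2 + sh^2) \<le> 0" using S(4) by (simp add: mult_nonpos_nonneg)
  moreover have "N * ch * sh > 0" using N T by simp
  ultimately have omXY: "om p q a0 b0 X Y < 0" using MI(4) fl by simp
  have ppXY: "pp p q X Y" using pp_of[OF BXY _ QY] QX QY by simp
  have "omE p q X Y < 0" by (rule U1[OF fr ppXY omXY])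
  from T_con[OF QX BXY QY this] show ?thesis unfolding img .
qed


end
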